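(* Let $n\ge4$, $2\le p\le n-1$, $j=n-p+1$. Let $\textnormal{Reg}(\mathcal{OCT}_n)$ be the set of regular elements of $\mathcal{OCT}_n$, $L(n,p)=\{\alpha\in\textnormal{Reg}(\mathcal{OCT}_n):|\textnormal{Im}\,\alpha|\le p\}$, $K_p=\{\alpha\in\textnormal{Reg}(\mathcal{OCT}_n):|\textnormal{Im}\,\alpha|=p\}$, and let $Q_p=K_p\cup\{0\}$ be the Rees quotient $L(n,p)/L(n,p-1)$, with product $\alpha*\beta=\alpha\beta$ if $|\textnormal{Im}(\alpha\beta)|=p$ and $\alpha*\beta=0$ otherwise. Define $\eta,\delta\in\mathcal{T}_n$ by: $x\eta=1$ for $1\le x\le j$ and $(j+i)\eta=i+1$ for $1\le i\le p-1$; $x\delta=x$ for $1\le x\le p-1$ and $x\delta=p$ for $p\le x\le n$. Let $R_\eta=\{\alpha\in K_p:\textnormal{Im}\,\alpha=\textnormal{Im}\,\eta\}$ and $L_\delta=\{\alpha\in K_p:\ker\alpha=\ker\delta\}$. Then $(R_\eta\cup L_\delta)\setminus\{\delta\}$ is a minimal generating set of the semigroup $Q_p$ (it generates $Q_p$ and no proper subset of it does).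
   Context: Maps are written on the right and composed left to right: $x(\alpha\beta)=(x\alpha)\beta$. $\mathcal{T}_n$ is the full transformation semigroup on $[n]=\{1,\dots,n\}$. $\alpha$ is a contraction if $|x\alpha-y\alpha|\le|x-y|$ for all $x,y$, order-preserving if $x\le y\Rightarrow x\alpha\le y\alpha$. $\mathcal{OCT}_n$ is the semigroup of order-preserving contractions; $\alpha\in\mathcal{OCT}_n$ is regular if $\alpha\beta\alpha=\alpha$ for some $\beta\in\mathcal{OCT}_n$ (these form a subsemigroup). $\ker\alpha=\{(x,y):x\alpha=y\alpha\}$. *)

theory Defs
  imports Main
begin

text \<open>Transformations of [n] = {1..n} are represented as functions nat \<Rightarrow> nat
  mapping {1..n} into {1..n} and acting as the identity outside {1..n}
  (a canonical representative). Maps act on the right: x(\<alpha>\<beta>) = (x\<alpha>)\<beta>,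
  so the product \<alpha>\<beta> is the function composition \<beta> \<circ> \<alpha>.\<close>

definition Tn :: "nat \<Rightarrow> (nat \<Rightarrow> nat) set" where
  "Tn n = {a. (\<forall>x\<in>{1..n}. a x \<in> {1..n}) \<and> (\<forall>x. x \<notin> {1..n} \<longrightarrow> a x = x)}"

definition tmul :: "(nat \<Rightarrow> nat) \<Rightarrow> (nat \<Rightarrow> nat) \<Rightarrow> (nat \<Rightarrow> nat)" where
  "tmul a b = b \<circ> a"

definition order_preserving :: "nat \<Rightarrow> (nat \<Rightarrow> nat) \<Rightarrow> bool" where
  "order_preserving n a \<longleftrightarrow> (\<forall>x\<in>{1..n}. \<forall>y\<in>{1..n}. x \<le> y \<longrightarrow> a x \<le> a y)"

definition contraction :: "nat \<Rightarrow> (nat \<Rightarrow> nat) \<Rightarrow> bool" where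
  "contraction n a \<longleftrightarrow> (\<forall>x\<in>{1..n}. \<forall>y\<in>{1..n}.
      \<bar>int (a x) - int (a y)\<bar> \<le> \<bar>int x - int y\<bar>)"

definition OCT :: "nat \<Rightarrow> (nat \<Rightarrow> nat) set" where
  "OCT n = {a \<in> Tn n. order_preserving n a \<and> contraction n a}"

definition RegOCT :: "nat \<Rightarrow> (nat \<Rightarrow> nat) set" where
  "RegOCT n = {a \<in> OCT n. \<exists>b\<in>OCT n. tmul (tmul a b) a = a}"

definition Im :: "nat \<Rightarrow> (nat \<Rightarrow> nat) \<Rightarrow> nat set" where
  "Im n a = a ` {1..n}"

definition ker :: "nat \<Rightarrow> (nat \<Rightarrow> nat) \<Rightarrow> (nat \<times> nat) set" where
  "ker n a = {(x, y). x \<in> {1..n} \<and> y \<in> {1..n} \<and> a x = a y}"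

definition Lnp :: "nat \<Rightarrow> nat \<Rightarrow> (nat \<Rightarrow> nat) set" where
  "Lnp n p = {a \<in> RegOCT n. card (Im n a) \<le> p}"

definition Kp :: "nat \<Rightarrow> nat \<Rightarrow> (nat \<Rightarrow> nat) set" where
  "Kp n p = {a \<in> RegOCT n. card (Im n a) = p}"

text \<open>Rees quotient Q_p = K_p \<union> {0}: the zero is None, an element \<alpha> of K_p is Some \<alpha>.\<close>

definition Qp :: "nat \<Rightarrow> nat \<Rightarrow> (nat \<Rightarrow> nat) option set" where
  "Qp n p = insert None (Some ` Kp n p)"

fun qmul :: "nat \<Rightarrow> nat \<Rightarrow> (nat \<Rightarrow> nat) option \<Rightarrow> (nat \<Rightarrow> nat) option \<Rightarrow> (nat \<Rightarrow> nat) option" where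
  "qmul n p (Some a) (Some b) =
     (if card (Im n (tmul a b)) = p then Some (tmul a b) else None)"
| "qmul n p _ _ = None"

inductive_set gen :: "nat \<Rightarrow> nat \<Rightarrow> (nat \<Rightarrow> nat) option set \<Rightarrow> (nat \<Rightarrow> nat) option set"
  for n p A where
  base: "x \<in> A \<Longrightarrow> x \<in> gen n p A"
| mul: "x \<in> gen n p A \<Longrightarrow> y \<in> gen n p A \<Longrightarrow> qmul n p x y \<in> gen n p A"

definition eta :: "nat \<Rightarrow> nat \<Rightarrow> nat \<Rightarrow> nat" where
  "eta n p x = (let j = n - p + 1 in
     if 1 \<le> x \<and> x \<le> j then 1
     else if j < x \<and> x \<le> n then x - j + 1
     else x)"

definition delta :: "nat \<Rightarrow> nat \<Rightarrow> nat \<Rightarrow> nat" where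
  "delta n p x = (if 1 \<le> x \<and> x \<le> p - 1 then x
     else if p \<le> x \<and> x \<le> n then p
     else x)"

definition R_eta :: "nat \<Rightarrow> nat \<Rightarrow> (nat \<Rightarrow> nat) set" where
  "R_eta n p = {a \<in> Kp n p. Im n a = Im n (eta n p)}"

definition L_delta :: "nat \<Rightarrow> nat \<Rightarrow> (nat \<Rightarrow> nat) set" where
  "L_delta n p = {a \<in> Kp n p. ker n a = ker n (delta n p)}"

end

theory Submission
  imports Defs
begin

definition gf :: "nat \<Rightarrow> nat \<Rightarrow> nat \<Rightarrow> nat \<Rightarrow> nat \<Rightarrow> nat" where
  "gf n p a k x = (if 1 \<le> x \<and> x \<le> n then a + min (x - k) (p - 1) else x)"

definition valid :: "nat \<Rightarrow> nat \<Rightarrow> nat \<Rightarrow> bool" where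
  "valid n p a \<longleftrightarrow> 1 \<le> a \<and> a + p - 1 \<le> n"

lemma gf_Tn: assumes "valid n p a" "valid n p k" "1 \<le> p" shows "gf n p a k \<in> Tn n"
  using assms unfolding Tn_def gf_def valid_def by auto

lemma min_step: "(x::nat) \<le> y \<Longrightarrow> min (y - k) q \<le> min (x - k) q + (y - x)"
  by linarith

lemma min_mono: "(x::nat) \<le> y \<Longrightarrow> min (x - k) q \<le> min (y - k) q"
  by linarith

lemma contr_gen:
  assumes "\<And>x y. x \<in> {1..n} \<Longrightarrow> y \<in> {1..n} \<Longrightarrow> x \<le> y \<Longrightarrow> f x \<le> f y \<and> f y \<le> f x + (y - x)"
  shows "contraction n f"
  unfolding contraction_def
proof (intro ballI)
  fix x y assume xy: "x \<in> {1..n}" "y \<in> {1..n}"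
  show "\<bar>int (f x) - int (f y)\<bar> \<le> \<bar>int x - int y\<bar>"
  proof (cases "x \<le> y")
    case True then show ?thesis using assms[OF xy True] by linarith
  next
    case False then show ?thesis using assms[OF xy(2,1)] by linarith
  qed
qed

lemma gf_OCT: assumes "valid n p a" "valid n p k" "1 \<le> p" shows "gf n p a k \<in> OCT n"
proof -
  have A: "gf n p a k x \<le> gf n p a k y \<and> gf n p a k y \<le> gf n p a k x + (y - x)"
    if "x \<in> {1..n}" "y \<in> {1..n}" "x \<le> y" for x y
  proof -
    have e: "gf n p a k x = a + min (x-k) (p-1)" "gf n p a k y = a + min (y-k) (p-1)"
      using that unfolding gf_def by auto
    show ?thesis unfolding e using min_step[OF that(3), of k "p-1"] min_mono[OF that(3), of k "p-1"] by linarith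
  qed
  show ?thesis using gf_Tn[OF assms] contr_gen[OF A] A unfolding OCT_def order_preserving_def
    by blast
qed

lemma gf_reg: assumes "valid n p a" "valid n p k" "1 \<le> p"
  shows "tmul (tmul (gf n p a k) (gf n p k a)) (gf n p a k) = gf n p a k"
  using assms unfolding tmul_def gf_def valid_def
  by (auto simp: fun_eq_iff min_def split: if_splits)

lemma gf_Im: assumes "valid n p a" "valid n p k" "1 \<le> p"
  shows "Im n (gf n p a k) = {a..a+p-1}"
proof
  show "Im n (gf n p a k) \<subseteq> {a..a+p-1}"
    using assms unfolding Im_def gf_def valid_def by auto
  show "{a..a+p-1} \<subseteq> Im n (gf n p a k)"
  proof
    fix y assume y: "y \<in> {a..a+p-1}"
    have "gf n p a k (k + (y - a)) = y" "k + (y - a) \<in> {1..n}"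
      using assms y unfolding gf_def valid_def by auto
    then show "y \<in> Im n (gf n p a k)" unfolding Im_def by force
  qed
qed

lemma gf_Kp: assumes "valid n p a" "valid n p k" "1 \<le> p"
  shows "gf n p a k \<in> Kp n p"
  using gf_OCT[OF assms] gf_OCT[OF assms(2,1,3)] gf_reg[OF assms] gf_Im[OF assms] assms(3)
  unfolding Kp_def RegOCT_def by auto

lemma ker_mem: "(x, y) \<in> ker n f \<longleftrightarrow> x \<in> {1..n} \<and> y \<in> {1..n} \<and> f x = f y"
  unfolding ker_def by simp

lemma gf_ker1: assumes "valid n p a" "valid n p k" "valid n p a'" "valid n p k'" "2 \<le> p"
  and "ker n (gf n p a k) = ker n (gf n p a' k')" and "k < k'" shows False
proof -
  have v: "gf n p a k k = a" "gf n p a k (k+1) = a + 1" "gf n p a' k' k = a'" "gf n p a' k' (k+1) = a'"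
    "k \<in> {1..n}" "k+1 \<in> {1..n}"
    using assms unfolding gf_def valid_def by auto
  have "(k, k+1) \<in> ker n (gf n p a' k')" using v ker_mem by metis
  moreover have "(k, k+1) \<notin> ker n (gf n p a k)" using v ker_mem by simp
  ultimately show False using assms(6) by simp
qed

lemma gf_ker: assumes "valid n p a" "valid n p k" "valid n p a'" "valid n p k'" "2 \<le> p"
  and "ker n (gf n p a k) = ker n (gf n p a' k')" shows "k = k'"
  using gf_ker1[OF assms] gf_ker1[OF assms(3,4,1,2,5) assms(6)[symmetric]] by (metis linorder_neqE_nat)

lemma gf_ker_eq: "ker n (gf n p a k) = ker n (gf n p a' k)"
proof -
  have "gf n p a k x = gf n p a k y \<longleftrightarrow> gf n p a' k x = gf n p a' k y"
    if "x \<in> {1..n}" "y \<in> {1..n}" for x y using that unfolding gf_def by simp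
  then show ?thesis unfolding ker_def by blast
qed

lemma gf_inj: assumes "valid n p a" "valid n p k" "valid n p a'" "valid n p k'" "2 \<le> p"
  and "gf n p a k = gf n p a' k'" shows "a = a' \<and> k = k'"
proof
  show "k = k'" using gf_ker[OF assms(1-5)] assms(6) by simp
  have "gf n p a k 1 = a" "gf n p a' k' 1 = a'" using assms unfolding gf_def valid_def by auto
  then show "a = a'" using assms(6) by simp
qed

lemma eta_gf: "p \<le> n \<Longrightarrow> 1 \<le> p \<Longrightarrow> eta n p = gf n p 1 (n - p + 1)"
  unfolding eta_def gf_def by (auto simp: fun_eq_iff Let_def min_def)

lemma delta_gf: "p \<le> n \<Longrightarrow> 1 \<le> p \<Longrightarrow> delta n p = gf n p 1 1"
  unfolding delta_def gf_def by (auto simp: fun_eq_iff min_def)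

lemma nogap:
  fixes f :: "nat \<Rightarrow> nat"
  assumes step: "\<And>x. 1 \<le> x \<Longrightarrow> x < n \<Longrightarrow> f (Suc x) \<le> f x + 1"
    and y: "f 1 \<le> y" "y \<le> f n" and n: "1 \<le> n"
  shows "\<exists>x\<in>{1..n}. f x = y"
proof -
  define S where "S = {x\<in>{1..n}. f x \<le> y}"
  have fin: "finite S" and ne: "1 \<in> S" using y n unfolding S_def by auto
  define x0 where "x0 = Max S"
  have x0S: "x0 \<in> S" using fin ne unfolding x0_def by (metis Max_in empty_iff)
  have x0max: "\<And>z. z \<in> S \<Longrightarrow> z \<le> x0" using fin unfolding x0_def by simp
  show ?thesis
  proof (cases "x0 = n")
    case True then show ?thesis using x0S y unfolding S_def by force
  next
    case False
    then have "x0 < n" "1 \<le> x0" using x0S unfolding S_def by auto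
    then have "Suc x0 \<notin> S" using x0max by fastforce
    then have "f (Suc x0) > y" using \<open>x0 < n\<close> unfolding S_def by auto
    moreover have "f (Suc x0) \<le> f x0 + 1" using step \<open>x0 < n\<close> \<open>1 \<le> x0\<close> by blast
    ultimately show ?thesis using x0S unfolding S_def by force
  qed
qed

lemma Kp_form:
  assumes al: "\<alpha> \<in> Kp n p" and p: "2 \<le> p" "p \<le> n"
  shows "\<exists>a k. valid n p a \<and> valid n p k \<and> \<alpha> = gf n p a k"
proof -
  obtain \<beta> where aT: "\<alpha> \<in> Tn n" and aop: "order_preserving n \<alpha>" and acon: "contraction n \<alpha>"
    and bT: "\<beta> \<in> Tn n" and bop: "order_preserving n \<beta>" and bcon: "contraction n \<beta>"
    and reg: "tmul (tmul \<alpha> \<beta>) \<alpha> = \<alpha>" and card: "card (Im n \<alpha>) = p"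
    using al unfolding Kp_def RegOCT_def OCT_def by auto
  have reg': "\<alpha> (\<beta> (\<alpha> x)) = \<alpha> x" for x
    using reg unfolding tmul_def by (metis comp_apply)
  have amono: "\<alpha> x \<le> \<alpha> y" if "1 \<le> x" "x \<le> y" "y \<le> n" for x y
    using aop that unfolding order_preserving_def by auto
  have astep: "\<alpha> (Suc x) \<le> \<alpha> x + 1" if "1 \<le> x" "x < n" for x
  proof -
    have "\<bar>int (\<alpha> x) - int (\<alpha> (Suc x))\<bar> \<le> \<bar>int x - int (Suc x)\<bar>"
    proof -
      have m: "x \<in> {1..n}" "Suc x \<in> {1..n}" using that by auto
      show ?thesis using acon m unfolding contraction_def by blast
    qed
    then show ?thesis by linarith
  qed
  have aran: "\<alpha> x \<in> {1..n}" if "x \<in> {1..n}" for x using aT that unfolding Tn_def by auto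
  have bran: "\<beta> x \<in> {1..n}" if "x \<in> {1..n}" for x using bT that unfolding Tn_def by auto
  define a where "a = \<alpha> 1"
  have n1: "1 \<le> n" using p by linarith
  have Imeq: "Im n \<alpha> = {a..\<alpha> n}"
  proof
    show "Im n \<alpha> \<subseteq> {a..\<alpha> n}" unfolding Im_def a_def using amono by auto
    show "{a..\<alpha> n} \<subseteq> Im n \<alpha>"
    proof
      fix y assume "y \<in> {a..\<alpha> n}"
      then obtain x where "x \<in> {1..n}" "\<alpha> x = y" using nogap[of n \<alpha> y] astep n1 unfolding a_def by auto
      then show "y \<in> Im n \<alpha>" unfolding Im_def by auto
    qed
  qed
  have an: "\<alpha> n = a + p - 1" using card Imeq p by simp
  have a1: "1 \<le> a" using aran[of 1] n1 unfolding a_def by auto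
  have an': "a + p - 1 \<le> n" using aran[of n] n1 an by auto
  have inv: "\<alpha> (\<beta> y) = y" if "y \<in> {a..a+p-1}" for y
  proof -
    from that have "y \<in> Im n \<alpha>" using Imeq an by simp
    then obtain x where "y = \<alpha> x" unfolding Im_def by auto
    then show ?thesis using reg' by simp
  qed
  define k where "k = \<beta> a"
  have chain: "\<beta> (a + i) = k + i" if "i < p" for i
    using that
  proof (induction i)
    case 0 then show ?case unfolding k_def by simp
  next
    case (Suc i)
    have IH: "\<beta> (a + i) = k + i" using Suc by simp
    have r1: "a + i \<in> {1..n}" "a + Suc i \<in> {1..n}" using Suc.prems a1 an' by auto
    have "\<beta> (a + i) \<le> \<beta> (a + Suc i)" using bop r1 unfolding order_preserving_def by auto
    moreover have "\<bar>int (\<beta> (a + i)) - int (\<beta> (a + Suc i))\<bar> \<le> \<bar>int (a + i) - int (a + Suc i)\<bar>"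
      using bcon r1 unfolding contraction_def by blast
    moreover have "\<beta> (a + i) \<noteq> \<beta> (a + Suc i)"
    proof
      assume "\<beta> (a + i) = \<beta> (a + Suc i)"
      then have "\<alpha> (\<beta> (a + i)) = \<alpha> (\<beta> (a + Suc i))" by simp
      moreover have "a + i \<in> {a..a+p-1}" "a + Suc i \<in> {a..a+p-1}" using Suc.prems by auto
      ultimately show False using inv[of "a+i"] inv[of "a + Suc i"] by simp
    qed
    ultimately show ?case using IH by linarith
  qed
  have achain: "\<alpha> (k + i) = a + i" if "i < p" for i
    using chain[OF that] inv[of "a+i"] that by simp
  have k1: "1 \<le> k" using bran[of a] a1 an' p unfolding k_def by auto
  have kn: "k + p - 1 \<le> n" using bran[of "a + (p-1)"] chain[of "p-1"] a1 an' p by auto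
  have "\<alpha> = gf n p a k"
  proof
    fix x
    show "\<alpha> x = gf n p a k x"
    proof (cases "x \<in> {1..n}")
      case False then show ?thesis using aT unfolding Tn_def gf_def by auto
    next
      case True
      consider "x \<le> k" | "k \<le> x \<and> x \<le> k + p - 1" | "k + p - 1 \<le> x" by linarith
      then show ?thesis
      proof cases
        case 1
        have "\<alpha> x \<le> \<alpha> k" using amono[of x k] 1 True kn p by auto
        moreover have "\<alpha> 1 \<le> \<alpha> x" using amono[of 1 x] True by auto
        ultimately show ?thesis using achain[of 0] p 1 True unfolding gf_def a_def by auto
      next
        case 2
        then have "\<alpha> (k + (x - k)) = a + (x - k)" using achain[of "x-k"] p by auto
        then show ?thesis using 2 True unfolding gf_def by auto
      next
        case 3
        have "\<alpha> (k + (p - 1)) \<le> \<alpha> x" using amono[of "k + (p-1)" x] 3 True k1 p by auto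
        moreover have "\<alpha> x \<le> \<alpha> n" using amono[of x n] True by auto
        ultimately show ?thesis using achain[of "p-1"] p 3 True an unfolding gf_def by auto
      qed
    qed
  qed
  then show ?thesis using a1 an' k1 kn unfolding valid_def by blast
qed

lemma Im_tmul: "Im n (tmul f g) = g ` Im n f"
  unfolding Im_def tmul_def by (simp add: image_comp)

lemma gf_prod:
  assumes v: "valid n p a" "valid n p k" "valid n p b" "valid n p l" and p: "2 \<le> p"
  shows "qmul n p (Some (gf n p a k)) (Some (gf n p b l)) = (if a = l then Some (gf n p b k) else None)"
proof (cases "a = l")
  case True
  have e: "tmul (gf n p a k) (gf n p b l) = gf n p b k"
  proof
    fix x
    show "tmul (gf n p a k) (gf n p b l) x = gf n p b k x"
    proof (cases "1 \<le> x \<and> x \<le> n")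
      case False
      then have "gf n p a k x = x" "gf n p b l x = x" "gf n p b k x = x" unfolding gf_def by auto
      then show ?thesis unfolding tmul_def by simp
    next
      case T: True
      define c where "c = min (x - k) (p - 1)"
      have c: "c \<le> p - 1" unfolding c_def by simp
      have g1: "gf n p a k x = a + c" using T unfolding gf_def c_def by simp
      have g2: "gf n p b l (a + c) = b + c" using c v True p unfolding gf_def valid_def by auto
      have g3: "gf n p b k x = b + c" using T unfolding gf_def c_def by simp
      show ?thesis unfolding tmul_def using g1 g2 g3 by simp
    qed
  qed
  show ?thesis using True e gf_Im[OF v(3,2)] p by simp
next
  case False
  have I: "Im n (tmul (gf n p a k) (gf n p b l)) = gf n p b l ` {a..a+p-1}"
    using gf_Im[OF v(1,2)] p Im_tmul by simp
  have ninj: "\<not> inj_on (gf n p b l) {a..a+p-1}"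
  proof (cases "a < l")
    case True
    have r: "1 \<le> a" "a \<le> n" "1 \<le> a+1" "a + 1 \<le> n" "a - l = 0" "a + 1 - l = 0"
      using True v p unfolding valid_def by auto
    have "gf n p b l a = b" "gf n p b l (a+1) = b" unfolding gf_def using r by simp_all
    moreover have "a \<noteq> a + 1" "a \<in> {a..a+p-1}" "a+1 \<in> {a..a+p-1}" using p by auto
    ultimately show ?thesis unfolding inj_on_def by metis
  next
    case c: False
    then have "l < a" using False by simp
    have r: "1 \<le> a+p-2" "a+p-2 \<le> n" "1 \<le> a+p-1" "a+p-1 \<le> n" "p - 1 \<le> a+p-2 - l" "p - 1 \<le> a+p-1 - l"
      using \<open>l < a\<close> v p unfolding valid_def by auto
    have "gf n p b l (a+p-2) = b + (p-1)" "gf n p b l (a+p-1) = b + (p-1)" unfolding gf_def using r by simp_all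
    moreover have "a+p-2 \<noteq> a+p-1" "a+p-2 \<in> {a..a+p-1}" "a+p-1 \<in> {a..a+p-1}" using p by auto
    ultimately show ?thesis unfolding inj_on_def by metis
  qed
  have "card (gf n p b l ` {a..a+p-1}) \<noteq> card {a..a+p-1}"
    using ninj inj_on_iff_eq_card[of "{a..a+p-1}" "gf n p b l"] by simp
  then have "card (Im n (tmul (gf n p a k) (gf n p b l))) \<noteq> p" using I p by simp
  then show ?thesis using False by simp
qed

lemma qmul_None1[simp]: "qmul n p None y = None" by simp
lemma qmul_None2[simp]: "qmul n p x None = None" by (cases x) simp_all

theorem lemma8:
  fixes n p :: nat
  assumes "n \<ge> 4" and "2 \<le> p" and "p \<le> n - 1"
  defines "A \<equiv> Some ` ((R_eta n p \<union> L_delta n p) - {delta n p})"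
  shows "gen n p A = Qp n p \<and> (\<forall>B. B \<subset> A \<longrightarrow> gen n p B \<noteq> Qp n p)"
proof -
  have p2: "2 \<le> p" and pn: "p \<le> n" using assms by auto
  have p1: "1 \<le> p" using assms by auto
  have v1: "valid n p 1" and v2: "valid n p 2" using assms unfolding valid_def by auto
  define G where "G a k \<longleftrightarrow> (a = (1::nat) \<and> k \<noteq> (1::nat)) \<or> (k = 1 \<and> a \<noteq> 1)" for a k
  have KP: "\<alpha> \<in> Kp n p \<longleftrightarrow> (\<exists>a k. valid n p a \<and> valid n p k \<and> \<alpha> = gf n p a k)" for \<alpha>
  proof
    assume "\<alpha> \<in> Kp n p" then show "\<exists>a k. valid n p a \<and> valid n p k \<and> \<alpha> = gf n p a k" using Kp_form[OF _ p2 pn] by blast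
  next
    assume "\<exists>a k. valid n p a \<and> valid n p k \<and> \<alpha> = gf n p a k"
    then show "\<alpha> \<in> Kp n p" using gf_Kp[OF _ _ p1] by blast
  qed
  have QP: "x \<in> Qp n p \<longleftrightarrow> x = None \<or> (\<exists>a k. valid n p a \<and> valid n p k \<and> x = Some (gf n p a k))" for x
    unfolding Qp_def using KP by auto
  have Ieta: "Im n (eta n p) = {1..p}" using eta_gf[OF pn] gf_Im[OF v1, of "n - p + 1"] p2 pn
    unfolding valid_def by auto
  have Rm: "gf n p a k \<in> R_eta n p \<longleftrightarrow> a = 1" if "valid n p a" "valid n p k" for a k
  proof -
    have I: "Im n (gf n p a k) = {a..a+p-1}" using gf_Im[OF that] p2 by simp
    have "Im n (gf n p a k) = {1..p} \<longleftrightarrow> a = 1"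
    proof
      assume e: "Im n (gf n p a k) = {1..p}"
      have "a \<in> {a..a+p-1}" "1 \<in> {1..p}" using p2 by simp_all
      then have "a \<in> {1..p}" "1 \<in> {a..a+p-1}" using e I by simp_all
      then show "a = 1" by simp
    next
      assume "a = 1" then show "Im n (gf n p a k) = {1..p}" using I p2 by simp
    qed
    then show ?thesis unfolding R_eta_def using gf_Kp[OF that] p2 Ieta by auto
  qed
  have Lm: "gf n p a k \<in> L_delta n p \<longleftrightarrow> k = 1" if "valid n p a" "valid n p k" for a k
  proof -
    have "ker n (gf n p a k) = ker n (gf n p 1 1) \<longleftrightarrow> k = 1"
      using gf_ker[OF that v1 v1 p2] gf_ker_eq[of n p a k 1] by auto
    then show ?thesis unfolding L_delta_def using gf_Kp[OF that] p2 delta_gf[OF pn p1] by auto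
  qed
  have Am: "x \<in> A \<longleftrightarrow> (\<exists>a k. valid n p a \<and> valid n p k \<and> G a k \<and> x = Some (gf n p a k))" for x
  proof
    assume "x \<in> A"
    then obtain \<alpha> where x: "x = Some \<alpha>" "\<alpha> \<in> R_eta n p \<union> L_delta n p" "\<alpha> \<noteq> delta n p"
      unfolding A_def by auto
    then have "\<alpha> \<in> Kp n p" unfolding R_eta_def L_delta_def by auto
    then obtain a k where v: "valid n p a" "valid n p k" "\<alpha> = gf n p a k" using KP by auto
    have "\<not> (a = 1 \<and> k = 1)" using x(3) v delta_gf[OF pn p1] p2 by auto
    then have "G a k" using x(2) Rm[OF v(1,2)] Lm[OF v(1,2)] unfolding G_def v(3) by blast
    then show "\<exists>a k. valid n p a \<and> valid n p k \<and> G a k \<and> x = Some (gf n p a k)" using v x by auto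
  next
    assume "\<exists>a k. valid n p a \<and> valid n p k \<and> G a k \<and> x = Some (gf n p a k)"
    then obtain a k where v: "valid n p a" "valid n p k" "G a k" "x = Some (gf n p a k)" by auto
    have "gf n p a k \<noteq> gf n p 1 1" using gf_inj[OF v(1,2) v1 v1 p2] v(3) unfolding G_def by blast
    moreover have "gf n p a k \<in> R_eta n p \<union> L_delta n p" using Rm[OF v(1,2)] Lm[OF v(1,2)] v(3)
      unfolding G_def by blast
    ultimately have "gf n p a k \<in> (R_eta n p \<union> L_delta n p) - {delta n p}"
      using delta_gf[OF pn p1] p2 by simp
    then show "x \<in> A" unfolding A_def v(4) by blast
  qed
  have clos: "qmul n p x y \<in> Qp n p" if "x \<in> Qp n p" "y \<in> Qp n p" for x y
  proof -
    show ?thesis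
    proof (cases "x = None \<or> y = None")
      case True then have "qmul n p x y = None" by auto
      then show ?thesis unfolding Qp_def by simp
    next
      case False
      then have xn: "x \<noteq> None" "y \<noteq> None" by auto
      have "\<exists>a k. valid n p a \<and> valid n p k \<and> x = Some (gf n p a k)" using that(1) xn(1) QP[of x] by blast
      moreover have "\<exists>a k. valid n p a \<and> valid n p k \<and> y = Some (gf n p a k)" using that(2) xn(2) QP[of y] by blast
      ultimately obtain a k b l where 3: "valid n p a" "valid n p k" "valid n p b" "valid n p l"
        "x = Some (gf n p a k)" "y = Some (gf n p b l)" by blast
      show ?thesis
      proof (cases "a = l")
        case True
        then have "qmul n p x y = Some (gf n p b k)" using 3 gf_prod[OF 3(1-4) p2] by simp
        then show ?thesis unfolding QP using 3 by blast
      next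
        case False
        then have "qmul n p x y = None" using 3 gf_prod[OF 3(1-4) p2] by simp
        then show ?thesis unfolding QP by blast
      qed
    qed
  qed
  have sub1: "gen n p A \<subseteq> Qp n p"
  proof
    fix x assume "x \<in> gen n p A"
    then show "x \<in> Qp n p"
    proof (induction rule: gen.induct)
      case (base x)
      then obtain a k where "valid n p a" "valid n p k" "x = Some (gf n p a k)" using Am[of x] by blast
      then show ?case using QP[of x] by blast
    next
      case (mul x y) then show ?case using clos by blast
    qed
  qed
  have sub2: "Qp n p \<subseteq> gen n p A"
  proof
    fix x assume "x \<in> Qp n p"
    then consider "x = None" | a k where "valid n p a" "valid n p k" "x = Some (gf n p a k)" using QP[of x] by blast
    then show "x \<in> gen n p A"
    proof cases
      case 1
      have "G 1 2" unfolding G_def by simp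
      then have g12: "Some (gf n p 1 2) \<in> gen n p A" using Am[of "Some (gf n p 1 2)"] v1 v2 by (blast intro: gen.base)
      have "qmul n p (Some (gf n p 1 2)) (Some (gf n p 1 2)) = None" using gf_prod[OF v1 v2 v1 v2 p2] by simp
      then show ?thesis using gen.mul[OF g12 g12] 1 by simp
    next
      case 2
      show ?thesis
      proof (cases "G a k")
        case True then show ?thesis using 2 Am[of x] by (blast intro: gen.base)
      next
        case False
        then consider "a = 1" "k = 1" | "a \<noteq> 1" "k \<noteq> 1" unfolding G_def by auto
        then show ?thesis
        proof cases
          case 1
          have "G 2 1" "G 1 2" unfolding G_def by simp_all
          then have g1: "Some (gf n p 2 1) \<in> gen n p A" "Some (gf n p 1 2) \<in> gen n p A"
            using Am[of "Some (gf n p 2 1)"] Am[of "Some (gf n p 1 2)"] v1 v2 by (blast intro: gen.base)+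
          have "qmul n p (Some (gf n p 2 1)) (Some (gf n p 1 2)) = Some (gf n p 1 1)"
            using gf_prod[OF v2 v1 v1 v2 p2] by simp
          then show ?thesis using gen.mul[OF g1] 1 2 by simp
        next
          case 3: 2
          have "G 1 k" "G a 1" using 3 unfolding G_def by simp_all
          then have g1: "Some (gf n p 1 k) \<in> gen n p A" "Some (gf n p a 1) \<in> gen n p A"
            using Am[of "Some (gf n p 1 k)"] Am[of "Some (gf n p a 1)"] v1 2 by (blast intro: gen.base)+
          have "qmul n p (Some (gf n p 1 k)) (Some (gf n p a 1)) = Some (gf n p a k)"
            using gf_prod[OF v1 2(2) 2(1) v1 p2] by simp
          then show ?thesis using gen.mul[OF g1] 2 by simp
        qed
      qed
    qed
  qed
  have minimal: "gen n p B \<noteq> Qp n p" if B: "B \<subset> A" for B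
  proof -
    obtain x where x: "x \<in> A" "x \<notin> B" using B by auto
    then obtain a0 k0 where v0: "valid n p a0" "valid n p k0" "G a0 k0" "x = Some (gf n p a0 k0)"
      using Am[of x] by blast
    have xQ: "x \<in> Qp n p" using v0 QP[of x] by blast
    show ?thesis
    proof (cases "a0 = 1")
      case True
      then have k0: "k0 \<noteq> 1" using v0(3) unfolding G_def by auto
      define P where "P y \<longleftrightarrow> y = None \<or> (\<exists>a k. valid n p a \<and> valid n p k \<and> k \<noteq> k0 \<and> y = Some (gf n p a k))" for y
      have "P y" if "y \<in> gen n p B" for y
        using that
      proof (induction rule: gen.induct)
        case (base y)
        then have "y \<in> A" using B by auto
        then obtain a k where v: "valid n p a" "valid n p k" "G a k" "y = Some (gf n p a k)" using Am[of y] by blast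
        have "k \<noteq> k0"
        proof
          assume "k = k0"
          then have "a = 1" using k0 v(3) unfolding G_def by auto
          then have "y = x" using v v0 True \<open>k = k0\<close> by simp
          then show False using base x by simp
        qed
        then show ?case unfolding P_def using v by auto
      next
        case (mul y z)
        show ?case
        proof (cases "y = None \<or> z = None")
          case True then show ?thesis by (auto simp: P_def)
        next
          case False
          then obtain a k b l where 3: "valid n p a" "valid n p k" "valid n p b" "valid n p l"
            "k \<noteq> k0" "y = Some (gf n p a k)" "z = Some (gf n p b l)" using mul.IH unfolding P_def by blast
          then show ?thesis using gf_prod[OF 3(1-4) p2] unfolding P_def by auto
        qed
      qed
      moreover have "\<not> P x"
      proof
        assume "P x"
        then obtain a k where "valid n p a" "valid n p k" "k \<noteq> k0" "x = Some (gf n p a k)"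
          unfolding P_def using v0 by auto
        then show False using gf_inj[OF v0(1,2) _ _ p2, of a k] v0 by auto
      qed
      ultimately show ?thesis using xQ by blast
    next
      case False
      then have a0: "a0 \<noteq> 1" by simp
      define P where "P y \<longleftrightarrow> y = None \<or> (\<exists>a k. valid n p a \<and> valid n p k \<and> a \<noteq> a0 \<and> y = Some (gf n p a k))" for y
      have "P y" if "y \<in> gen n p B" for y
        using that
      proof (induction rule: gen.induct)
        case (base y)
        then have "y \<in> A" using B by auto
        then obtain a k where v: "valid n p a" "valid n p k" "G a k" "y = Some (gf n p a k)" using Am[of y] by blast
        have "a \<noteq> a0"
        proof
          assume "a = a0"
          then have "k = 1" "k0 = 1" using a0 v(3) v0(3) unfolding G_def by auto
          then have "y = x" using v v0 \<open>a = a0\<close> by simp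
          then show False using base x by simp
        qed
        then show ?case unfolding P_def using v by auto
      next
        case (mul y z)
        show ?case
        proof (cases "y = None \<or> z = None")
          case True then show ?thesis by (auto simp: P_def)
        next
          case False
          then obtain a k b l where 3: "valid n p a" "valid n p k" "valid n p b" "valid n p l"
            "b \<noteq> a0" "y = Some (gf n p a k)" "z = Some (gf n p b l)" using mul.IH unfolding P_def by blast
          then show ?thesis using gf_prod[OF 3(1-4) p2] unfolding P_def by auto
        qed
      qed
      moreover have "\<not> P x"
      proof
        assume "P x"
        then obtain a k where "valid n p a" "valid n p k" "a \<noteq> a0" "x = Some (gf n p a k)"
          unfolding P_def using v0 by auto
        then show False using gf_inj[OF v0(1,2) _ _ p2, of a k] v0 by auto
      qed
      ultimately show ?thesis using xQ by blast
    qed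
  qed
  show ?thesis using sub1 sub2 minimal by blast
qed

end
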